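(* Let $\mathcal{H}$ be a complex linear space with a Hermitian sesquilinear form $[\cdot,\cdot]$, and suppose $\mathcal{H}=\operatorname{span}\{f_n\}_{n=1}^\infty$ (finite linear combinations), where $[f_n,f_m]=0$ for $n\neq m$, $[f_n,f_n]\neq 0$ for all $n$, and there exist indices $n,m$ with $[f_n,f_n]>0$ and $[f_m,f_m]<0$. Let $\mathcal{F}_{++}=\{f\in\mathcal{H}:[f,f]>0\}$. Let $W$ be the linear operator on $\mathcal{H}$ defined by $Wf_n=\mu_nf_n$, where $\mu_n\in\mathbb{C}$, $\mu_n\neq0$. Then the following are equivalent: (i) $W$ maps $\mathcal{F}_{++}$ onto $\mathcal{F}_{++}$ in a one-to-one manner; (ii) there exists $c>0$ such that $|\mu_n|=c$ for all $n\in\mathbb{N}$. *)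

theory Defs
  imports Complex_Main
begin

text \<open>A complex linear space is rendered as a type 'a of class ab_group_add together with
  a scalar multiplication sc :: complex => 'a => 'a satisfying the library locale
  vector_space sc (HOL.Vector_Spaces).\<close>

definition hermitian_sesq ::
  "(complex \<Rightarrow> 'a::ab_group_add \<Rightarrow> 'a) \<Rightarrow> ('a \<Rightarrow> 'a \<Rightarrow> complex) \<Rightarrow> bool" where
  "hermitian_sesq sc B \<longleftrightarrow>
     (\<forall>x y z. B (x + y) z = B x z + B y z) \<and>
     (\<forall>c x y. B (sc c x) y = c * B x y) \<and>
     (\<forall>x y. B y x = cnj (B x y))"

text \<open>Positive cone F_{++}; [f,f] is real for a Hermitian form, so we compare its real part.\<close>
definition pos_cone :: "('a \<Rightarrow> 'a \<Rightarrow> complex) \<Rightarrow> 'a set" where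
  "pos_cone B = {x. Re (B x x) > 0}"

end

theory Submission
  imports Defs
begin

lemma herm_facts:
  assumes "hermitian_sesq sc B"
  shows "B (x+y) z = B x z + B y z" "B (sc c x) y = c * B x y" "B y x = cnj (B x y)"
    "B x (y+z) = B x y + B x z" "B x (sc c y) = cnj c * B x y" "B 0 y = 0" "B y 0 = 0"
    "B (x - y) z = B x z - B y z"
proof -
  have a: "\<And>x y z. B (x+y) z = B x z + B y z" and s: "\<And>c x y. B (sc c x) y = c * B x y"
    and h: "\<And>x y. B y x = cnj (B x y)" using assms unfolding hermitian_sesq_def by blast+
  show "B (x+y) z = B x z + B y z" by (rule a)
  show "B (sc c x) y = c * B x y" by (rule s)
  show "B y x = cnj (B x y)" by (rule h)
  show "B x (y+z) = B x y + B x z" using a h by (metis complex_cnj_add)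
  show "B x (sc c y) = cnj c * B x y" using s h by (metis complex_cnj_mult)
  have z: "B 0 w = 0" for w using a[of 0 0 w] by simp
  show "B 0 y = 0" by (rule z)
  show "B y 0 = 0" using z h by (metis complex_cnj_zero)
  show "B (x - y) z = B x z - B y z" using a[of "x - y" y z] by (simp add: algebra_simps)
qed

theorem proposition2p5:
  fixes sc :: "complex \<Rightarrow> 'a::ab_group_add \<Rightarrow> 'a"
    and B :: "'a \<Rightarrow> 'a \<Rightarrow> complex"
    and f :: "nat \<Rightarrow> 'a"
    and \<mu> :: "nat \<Rightarrow> complex"
    and W :: "'a \<Rightarrow> 'a"
  assumes vs: "vector_space sc"
    and herm: "hermitian_sesq sc B"
    and span: "module.span sc (range f) = UNIV"
    and orth: "\<And>n m. n \<noteq> m \<Longrightarrow> B (f n) (f m) = 0"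
    and nondeg: "\<And>n. B (f n) (f n) \<noteq> 0"
    and pos: "\<exists>n. Re (B (f n) (f n)) > 0"
    and neg: "\<exists>m. Re (B (f m) (f m)) < 0"
    and mu_nz: "\<And>n. \<mu> n \<noteq> 0"
    and W_lin: "Vector_Spaces.linear sc sc W"
    and W_f: "\<And>n. W (f n) = sc (\<mu> n) (f n)"
  shows "bij_betw W (pos_cone B) (pos_cone B) \<longleftrightarrow> (\<exists>c>0. \<forall>n. cmod (\<mu> n) = c)"
proof -
  interpret V: vector_space sc by (rule vs)
  interpret L: Vector_Spaces.linear sc sc W by (rule W_lin)
  note H0 = herm_facts[OF herm]
  note H = H0(1,2,4,5,6,7,8)
  have inS: "x \<in> V.span (range f)" for x using span by simp
  have Breal: "B x x = complex_of_real (Re (B x x))" for x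
  proof -
    have "B x x = cnj (B x x)" using H0(3) by metis
    then have "Im (B x x) = 0" by (metis cnj.sel(2) equal_neg_zero)
    then show ?thesis by (simp add: complex_eq_iff)
  qed
  have L1: "B (W z) (f m) = \<mu> m * B z (f m)" for z m
    using inS[of z]
  proof (induct rule: V.span_induct_alt)
    case base
    then show ?case by (simp add: L.zero H)
  next
    case (step c x y)
    then obtain n where xn: "x = f n" by auto
    have "B (W (sc c x + y)) (f m) = c * (\<mu> n * B (f n) (f m)) + \<mu> m * B y (f m)"
      using step by (simp add: L.add L.scale W_f xn H)
    also have "\<dots> = \<mu> m * B (sc c x + y) (f m)"
      by (cases "n = m") (simp_all add: xn H orth algebra_simps)
    finally show ?case .
  qed
  have L2: "z = 0" if hz: "\<And>m. B z (f m) = 0" for z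
  proof -
    obtain t r where t: "finite t" "t \<subseteq> range f" and z: "z = (\<Sum>a\<in>t. sc (r a) a)"
      using inS[of z] unfolding V.span_explicit by blast
    have Bsum: "B (\<Sum>a\<in>T. sc (r a) a) y = (\<Sum>a\<in>T. r a * B a y)" if "finite T" for T y
      using that by (induct T rule: finite_induct) (simp_all add: H)
    have "r a = 0" if a: "a \<in> t" for a
    proof -
      obtain m where am: "a = f m" using a t by auto
      have "(\<Sum>b\<in>t. r b * B b (f m)) = r a * B a (f m)"
      proof (rule sum.remove[OF t(1) a, THEN trans])
        have "(\<Sum>b\<in>t - {a}. r b * B b (f m)) = 0"
        proof (rule sum.neutral, intro ballI)
          fix b assume "b \<in> t - {a}"
          then obtain n where "b = f n" "n \<noteq> m" using t am by blast
          then show "r b * B b (f m) = 0" by (simp add: orth)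
        qed
        then show "r a * B a (f m) + (\<Sum>b\<in>t - {a}. r b * B b (f m)) = r a * B a (f m)" by simp
      qed
      moreover have "(\<Sum>b\<in>t. r b * B b (f m)) = 0" using hz[of m] Bsum[OF t(1)] z by simp
      ultimately show ?thesis using nondeg[of m] am by simp
    qed
    then show ?thesis using z by simp
  qed
  have Winj: "z = 0" if "W z = 0" for z
  proof (rule L2)
    fix m
    have "\<mu> m * B z (f m) = 0" using L1[of z m] that by (simp add: H)
    then show "B z (f m) = 0" using mu_nz[of m] by simp
  qed
  have Wf2: "W (sc a (f i) + sc b (f j)) = sc (a * \<mu> i) (f i) + sc (b * \<mu> j) (f j)" for a b i j
    by (simp add: L.add L.scale W_f)
  have Q2: "Re (B (sc a (f i) + sc b (f j)) (sc a (f i) + sc b (f j)))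
      = (cmod a)^2 * Re (B (f i) (f i)) + (cmod b)^2 * Re (B (f j) (f j))" if ij: "i \<noteq> j" for a b i j
  proof -
    have "B (sc a (f i) + sc b (f j)) (sc a (f i) + sc b (f j))
        = (a * cnj a) * B (f i) (f i) + (b * cnj b) * B (f j) (f j)"
      using orth[OF ij] orth[of j i] ij by (simp add: H algebra_simps)
    also have "\<dots> = of_real ((cmod a)^2) * B (f i) (f i)
        + of_real ((cmod b)^2) * B (f j) (f j)"
      by (simp only: complex_norm_square)
    finally show ?thesis by simp
  qed
  have key: "cmod (\<mu> i) = cmod (\<mu> j)" if bij: "bij_betw W (pos_cone B) (pos_cone B)"
      and ip: "Re (B (f i) (f i)) > 0" and jn: "Re (B (f j) (f j)) < 0" for i j
  proof -
    have ij: "i \<noteq> j" using ip jn by auto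
    define P where "P = Re (B (f i) (f i))"
    define N where "N = - Re (B (f j) (f j))"
    define u where "u = (cmod (\<mu> i))^2"
    define v where "v = (cmod (\<mu> j))^2"
    have P: "P > 0" and N: "N > 0" using ip jn by (auto simp: P_def N_def)
    have u: "u > 0" and v: "v > 0" using mu_nz by (auto simp: u_def v_def)
    have "v \<le> u"
    proof (rule ccontr)
      assume "\<not> v \<le> u"
      then have vu: "v / u > 1" using u by simp
      define s where "s = N * v / (P * u)"
      have s: "s \<ge> 0" using P N u v by (simp add: s_def)
      define a where "a = complex_of_real (sqrt s)"
      have ca: "(cmod a)^2 = s" using s by (simp add: a_def)
      let ?x = "sc a (f i) + sc 1 (f j)"
      have "Re (B ?x ?x) = s * P - N" using Q2[OF ij, of a 1] ca by (simp add: P_def N_def)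
      also have "s * P = N * (v / u)" using P by (simp add: s_def)
      finally have "Re (B ?x ?x) > 0" using mult_strict_left_mono[OF vu N] by simp
      then have "?x \<in> pos_cone B" by (simp add: pos_cone_def)
      then have "W ?x \<in> pos_cone B" using bij by (auto simp: bij_betw_def)
      then have "Re (B (W ?x) (W ?x)) > 0" by (simp add: pos_cone_def)
      moreover have "Re (B (W ?x) (W ?x)) = s * u * P - v * N"
        unfolding Wf2 using Q2[OF ij, of "a * \<mu> i" "1 * \<mu> j"] ca
        by (simp add: P_def N_def u_def v_def norm_mult power_mult_distrib)
      moreover have "s * u * P = v * N" using P u by (simp add: s_def)
      ultimately show False by simp
    qed
    moreover have "u \<le> v"
    proof (rule ccontr)
      assume "\<not> u \<le> v"
      then have vu: "u / v > 1" using v by simp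
      define s where "s = N * u / (P * v)"
      have s: "s \<ge> 0" using P N u v by (simp add: s_def)
      define a where "a = complex_of_real (sqrt s)"
      have ca: "(cmod a)^2 = s" using s by (simp add: a_def)
      let ?y = "sc a (f i) + sc 1 (f j)"
      have "Re (B ?y ?y) = s * P - N" using Q2[OF ij, of a 1] ca by (simp add: P_def N_def)
      also have "s * P = N * (u / v)" using P by (simp add: s_def)
      finally have "Re (B ?y ?y) > 0" using mult_strict_left_mono[OF vu N] by simp
      then have "?y \<in> pos_cone B" by (simp add: pos_cone_def)
      then obtain x where x: "x \<in> pos_cone B" "W x = ?y" using bij
        by (metis bij_betw_def imageE)
      let ?x = "sc (a / \<mu> i) (f i) + sc (1 / \<mu> j) (f j)"
      have "W ?x = ?y" unfolding Wf2 using mu_nz[of i] mu_nz[of j] by simp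
      then have "W (x - ?x) = 0" using x by (simp add: L.diff)
      then have "x = ?x" using Winj by force
      then have "Re (B ?x ?x) > 0" using x by (simp add: pos_cone_def)
      moreover have "Re (B ?x ?x) = s / u * P - N / v"
        using Q2[OF ij, of "a / \<mu> i" "1 / \<mu> j"] ca
        by (simp add: P_def N_def u_def v_def norm_divide power_divide)
      moreover have "s / u * P = N / v" using P u by (simp add: s_def)
      ultimately show False by simp
    qed
    ultimately have "u = v" by simp
    then show ?thesis unfolding u_def v_def by (simp add: power2_eq_iff_nonneg)
  qed
  show ?thesis
  proof
    assume bij: "bij_betw W (pos_cone B) (pos_cone B)"
    obtain n0 where n0: "Re (B (f n0) (f n0)) > 0" using pos by auto
    obtain m0 where m0: "Re (B (f m0) (f m0)) < 0" using neg by auto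
    show "\<exists>c>0. \<forall>n. cmod (\<mu> n) = c"
    proof (intro exI conjI allI)
      show "cmod (\<mu> n0) > 0" using mu_nz by simp
      fix n
      have "Re (B (f n) (f n)) \<noteq> 0" using nondeg[of n] Breal[of "f n"] by auto
      then consider "Re (B (f n) (f n)) > 0" | "Re (B (f n) (f n)) < 0" by linarith
      then show "cmod (\<mu> n) = cmod (\<mu> n0)"
      proof cases
        case 1
        then show ?thesis using key[OF bij 1 m0] key[OF bij n0 m0] by simp
      next
        case 2
        then show ?thesis using key[OF bij n0 2] by simp
      qed
    qed
  next
    assume "\<exists>c>0. \<forall>n. cmod (\<mu> n) = c"
    then obtain c where c: "c > 0" "\<And>n. cmod (\<mu> n) = c" by auto
    have mu2: "\<mu> n * cnj (\<mu> n) = of_real (c^2)" for n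
      using complex_norm_square[of "\<mu> n"] c(2)[of n] by simp
    have QW1: "B (W x) (W (f m)) = of_real (c^2) * B x (f m)" for x m
      using inS[of x]
    proof (induct rule: V.span_induct_alt)
      case base
      then show ?case by (simp add: L.zero H)
    next
      case (step d x y)
      then obtain n where xn: "x = f n" by auto
      have "B (W (sc d x + y)) (W (f m)) = d * (\<mu> n * cnj (\<mu> m) * B (f n) (f m)) + of_real (c^2) * B y (f m)"
        using step by (simp add: L.add L.scale W_f xn H) (simp add: algebra_simps)
      also have "\<dots> = of_real (c^2) * B (sc d x + y) (f m)"
        by (cases "n = m") (simp_all add: xn H orth algebra_simps mu2)
      finally show ?case .
    qed
    have QW: "B (W x) (W y) = of_real (c^2) * B x y" for x y
      using inS[of y]
    proof (induct rule: V.span_induct_alt)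
      case base
      then show ?case by (simp add: L.zero H)
    next
      case (step d z y)
      then obtain m where zm: "z = f m" by auto
      show ?case using step QW1[of x m] by (simp add: L.add L.scale zm H algebra_simps)
    qed
    have ReQW: "Re (B (W x) (W x)) = c^2 * Re (B x x)" for x
      using QW[of x x] by simp
    have surj: "y \<in> range W" for y
      using inS[of y]
    proof (induct rule: V.span_induct_alt)
      case base
      then show ?case using L.zero by (metis rangeI)
    next
      case (step d z y)
      then obtain m where zm: "z = f m" by auto
      from step obtain x' where x': "y = W x'" by auto
      have "W (sc (d / \<mu> m) (f m) + x') = sc d z + y"
        using mu_nz[of m] by (simp add: L.add L.scale W_f zm x')
      then show ?case by (metis rangeI)
    qed
    show "bij_betw W (pos_cone B) (pos_cone B)"
      unfolding bij_betw_def
    proof (intro conjI)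
      show "inj_on W (pos_cone B)"
      proof (rule inj_onI)
        fix x y assume "W x = W y"
        then have "W (x - y) = 0" by (simp add: L.diff)
        then have "x - y = 0" by (rule Winj)
        then show "x = y" by simp
      qed
      show "W ` pos_cone B = pos_cone B"
      proof
        show "W ` pos_cone B \<subseteq> pos_cone B"
          using c(1) by (auto simp: pos_cone_def ReQW)
        show "pos_cone B \<subseteq> W ` pos_cone B"
        proof
          fix y assume y: "y \<in> pos_cone B"
          obtain x where x: "y = W x" using surj[of y] by auto
          have "c^2 * Re (B x x) > 0" using y x ReQW by (simp add: pos_cone_def)
          then have "Re (B x x) > 0" using c(1) by (simp add: zero_less_mult_iff)
          then show "y \<in> W ` pos_cone B" using x by (auto simp: pos_cone_def)
        qed
      qed
    qed
  qed
qed

end
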